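(* Let $G$ be a connected nonbipartite graph with vertex set $\{u_1,\dots,u_m\}$ and $\kappa(G)=\delta(G)>0$, and let $n\ge 3$. Let $S\subseteq V(G\times K_n)$ satisfy: (1) $|S|=(n-1)\delta(G)$; (2) $S_i':=S_i\setminus S\neq\varnothing$ for every $i=1,\dots,m$; (3) $G\times K_n-S$ has no isolated vertex. Then for every $i\in\{1,\dots,m\}$, the set $S_i'$ is contained in the vertex set of a single connected component of $G\times K_n-S$.
   Context: The Kronecker product $G_1\times G_2$ has vertex set $V(G_1)\times V(G_2)$, with $(u_1,v_1)(u_2,v_2)$ an edge iff $u_1u_2\in E(G_1)$ and $v_1v_2\in E(G_2)$. Write $V(K_n)=\{v_1,\dots,v_n\}$ and $S_i=\{u_i\}\times V(K_n)$ for $i=1,\dots,m$. *)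

theory Defs
  imports Main
begin

definition simple_graph :: "'a set \<Rightarrow> ('a \<Rightarrow> 'a \<Rightarrow> bool) \<Rightarrow> bool" where
  "simple_graph V E \<longleftrightarrow> finite V \<and> (\<forall>x y. E x y \<longrightarrow> x \<in> V \<and> y \<in> V)
     \<and> (\<forall>x y. E x y \<longrightarrow> E y x) \<and> (\<forall>x. \<not> E x x)"

definition induced :: "'a set \<Rightarrow> ('a \<Rightarrow> 'a \<Rightarrow> bool) \<Rightarrow> 'a \<Rightarrow> 'a \<Rightarrow> bool" where
  "induced W E x y \<longleftrightarrow> x \<in> W \<and> y \<in> W \<and> E x y"

definition component :: "'a set \<Rightarrow> ('a \<Rightarrow> 'a \<Rightarrow> bool) \<Rightarrow> 'a \<Rightarrow> 'a set" where
  "component W E x = {y. (induced W E)\<^sup>*\<^sup>* x y \<and> y \<in> W}"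

definition connected_graph :: "'a set \<Rightarrow> ('a \<Rightarrow> 'a \<Rightarrow> bool) \<Rightarrow> bool" where
  "connected_graph W E \<longleftrightarrow> W \<noteq> {} \<and> (\<forall>x\<in>W. \<forall>y\<in>W. (induced W E)\<^sup>*\<^sup>* x y)"

definition bipartite :: "'a set \<Rightarrow> ('a \<Rightarrow> 'a \<Rightarrow> bool) \<Rightarrow> bool" where
  "bipartite V E \<longleftrightarrow> (\<exists>A B. A \<inter> B = {} \<and> A \<union> B = V \<and>
     (\<forall>x\<in>V. \<forall>y\<in>V. E x y \<longrightarrow> (x \<in> A \<and> y \<in> B) \<or> (x \<in> B \<and> y \<in> A)))"

definition degree :: "'a set \<Rightarrow> ('a \<Rightarrow> 'a \<Rightarrow> bool) \<Rightarrow> 'a \<Rightarrow> nat" where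
  "degree V E x = card {y \<in> V. E x y}"

definition min_degree :: "'a set \<Rightarrow> ('a \<Rightarrow> 'a \<Rightarrow> bool) \<Rightarrow> nat" where
  "min_degree V E = Min (degree V E ` V)"

definition vertex_connectivity :: "'a set \<Rightarrow> ('a \<Rightarrow> 'a \<Rightarrow> bool) \<Rightarrow> nat" where
  "vertex_connectivity V E =
     Min {card S | S. S \<subseteq> V \<and> (card (V - S) \<le> 1 \<or> \<not> connected_graph (V - S) E)}"

definition kron_Kn_vertices :: "'a set \<Rightarrow> nat \<Rightarrow> ('a \<times> nat) set" where
  "kron_Kn_vertices V n = V \<times> {0..<n}"

definition kron_Kn_adj :: "('a \<Rightarrow> 'a \<Rightarrow> bool) \<Rightarrow> nat \<Rightarrow> 'a \<times> nat \<Rightarrow> 'a \<times> nat \<Rightarrow> bool" where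
  "kron_Kn_adj E n p q \<longleftrightarrow> E (fst p) (fst q) \<and> snd p < n \<and> snd q < n \<and> snd p \<noteq> snd q"

end

theory Submission
  imports Defs
begin

lemma rtranclp_sym_aux:
  assumes "\<And>x y. R x y \<Longrightarrow> R y x" "R\<^sup>*\<^sup>* x y" shows "R\<^sup>*\<^sup>* y x"
  using assms(2)
proof induction
  case base then show ?case by simp
next
  case (step y z) then show ?case
    by (meson assms(1) converse_rtranclp_into_rtranclp)
qed

lemma double_cover:
  fixes V :: "'a set" and E :: "'a \<Rightarrow> 'a \<Rightarrow> bool" and W :: "('a \<times> nat) set"
  assumes sg: "simple_graph V E" and con: "connected_graph V E"
    and u: "u \<in> V" and ab: "a \<noteq> b"
    and Wa: "\<forall>x\<in>V. (x,a) \<in> W \<and> (x,b) \<in> W"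
    and adj: "\<And>x y c e. (x,c) \<in> W \<Longrightarrow> (y,e) \<in> W \<Longrightarrow> E x y \<Longrightarrow> c \<noteq> e \<Longrightarrow> R (x,c) (y,e)"
    and symR: "\<And>p q. R p q \<Longrightarrow> R q p"
    and nc: "\<not> (induced W R)\<^sup>*\<^sup>* (u,a) (u,b)"
  shows "bipartite V E"
proof -
  define I where "I = induced W R"
  have Isym: "\<And>p q. I p q \<Longrightarrow> I q p" unfolding I_def induced_def using symR by blast
  have csym: "\<And>p q. I\<^sup>*\<^sup>* p q \<Longrightarrow> I\<^sup>*\<^sup>* q p" using rtranclp_sym_aux[of I] Isym by blast
  have edge: "\<And>x y c e. x \<in> V \<Longrightarrow> y \<in> V \<Longrightarrow> E x y \<Longrightarrow> c \<in> {a,b} \<Longrightarrow> e \<in> {a,b} \<Longrightarrow> c \<noteq> e \<Longrightarrow> I (x,c) (y,e)"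
    unfolding I_def induced_def using adj Wa by blast
  have nc': "\<not> I\<^sup>*\<^sup>* (u,a) (u,b)" using nc I_def by simp
  have inv: "(I\<^sup>*\<^sup>* (u,a) (x,a) \<and> I\<^sup>*\<^sup>* (u,b) (x,b)) \<or> (I\<^sup>*\<^sup>* (u,a) (x,b) \<and> I\<^sup>*\<^sup>* (u,b) (x,a))"
    if "(induced V E)\<^sup>*\<^sup>* u x" for x
    using that
  proof induction
    case base then show ?case by simp
  next
    case (step y z)
    have yz: "y \<in> V" "z \<in> V" "E y z" using step(2) unfolding induced_def by auto
    have e1: "I (y,a) (z,b)" and e2: "I (y,b) (z,a)" using edge[OF yz] ab by auto
    show ?case using step(3) e1 e2 by (meson rtranclp.rtrancl_into_rtrancl)
  qed
  have inv2: "x \<in> V \<Longrightarrow> (I\<^sup>*\<^sup>* (u,a) (x,a) \<and> I\<^sup>*\<^sup>* (u,b) (x,b)) \<or> (I\<^sup>*\<^sup>* (u,a) (x,b) \<and> I\<^sup>*\<^sup>* (u,b) (x,a))" for x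
    using inv con u unfolding connected_graph_def by blast
  define P where "P = {x\<in>V. I\<^sup>*\<^sup>* (u,a) (x,a)}"
  have "\<forall>x\<in>V. \<forall>y\<in>V. E x y \<longrightarrow> (x \<in> P \<and> y \<in> V - P) \<or> (x \<in> V - P \<and> y \<in> P)"
  proof (intro ballI impI)
    fix x y assume x: "x \<in> V" and y: "y \<in> V" and e: "E x y"
    have e1: "I (x,a) (y,b)" and e2: "I (x,b) (y,a)" using edge[OF x y e] ab by auto
    show "(x \<in> P \<and> y \<in> V - P) \<or> (x \<in> V - P \<and> y \<in> P)"
    proof (cases "x \<in> P")
      case True
      have xa: "I\<^sup>*\<^sup>* (u,a) (x,a)" using True P_def by simp
      show ?thesis
      proof (rule ccontr)
        assume "\<not> ?thesis"
        then have "y \<in> P" using True y by blast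
        then have ya: "I\<^sup>*\<^sup>* (u,a) (y,a)" using P_def by simp
        from inv2[OF y] show False
        proof
          assume h: "I\<^sup>*\<^sup>* (u,a) (y,a) \<and> I\<^sup>*\<^sup>* (u,b) (y,b)"
          have "I (y,b) (x,a)" using Isym e1 by blast
          then have "I\<^sup>*\<^sup>* (u,b) (x,a)" using h by (meson rtranclp.rtrancl_into_rtrancl)
          then show False using xa csym nc' by (meson rtranclp_trans)
        next
          assume h: "I\<^sup>*\<^sup>* (u,a) (y,b) \<and> I\<^sup>*\<^sup>* (u,b) (y,a)"
          then show False using ya csym nc' by (meson rtranclp_trans)
        qed
      qed
    next
      case False
      then have xb: "I\<^sup>*\<^sup>* (u,a) (x,b)" using inv2[OF x] x P_def by auto
      show ?thesis
      proof (cases "y \<in> P")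
        case True then show ?thesis using False x by blast
      next
        case False
        then have "I\<^sup>*\<^sup>* (u,b) (y,a)" using inv2[OF y] y P_def by auto
        then have "I\<^sup>*\<^sup>* (u,a) (u,b)" using xb e2 csym by (meson rtranclp.rtrancl_into_rtrancl rtranclp_trans)
        then show ?thesis using nc' by simp
      qed
    qed
  qed
  then show ?thesis unfolding bipartite_def
    by (rule_tac x=P in exI, rule_tac x="V - P" in exI) (auto simp: P_def)
qed


theorem lemma2p4:
  fixes V :: "'a set" and E :: "'a \<Rightarrow> 'a \<Rightarrow> bool" and n :: nat
    and S :: "('a \<times> nat) set"
  assumes "simple_graph V E"
    and "connected_graph V E"
    and "\<not> bipartite V E"
    and "vertex_connectivity V E = min_degree V E"
    and "min_degree V E > 0"
    and "n \<ge> 3"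
    and "S \<subseteq> kron_Kn_vertices V n"
    and "card S = (n - 1) * min_degree V E"
    and "\<forall>u\<in>V. ({u} \<times> {0..<n}) - S \<noteq> {}"
    and "\<forall>x \<in> kron_Kn_vertices V n - S. \<exists>y \<in> kron_Kn_vertices V n - S. kron_Kn_adj E n x y"
  shows "\<forall>u\<in>V. \<exists>x \<in> kron_Kn_vertices V n - S.
           ({u} \<times> {0..<n}) - S \<subseteq> component (kron_Kn_vertices V n - S) (kron_Kn_adj E n) x"
proof (intro ballI)
  note sg = assms(1) and con = assms(2) and nbip = assms(3) and dpos = assms(5) and n3 = assms(6)
    and SV = assms(7) and cardS = assms(8) and nonempty = assms(9) and noiso = assms(10)
  define W where "W = kron_Kn_vertices V n - S"
  define R where "R = kron_Kn_adj E n"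
  define I where "I = induced W R"
  define \<delta> where "\<delta> = min_degree V E"
  have finV: "finite V" and Esym: "\<And>x y. E x y \<Longrightarrow> E y x" and Eirr: "\<And>x. \<not> E x x"
    and EV: "\<And>x y. E x y \<Longrightarrow> x \<in> V \<and> y \<in> V"
    using sg unfolding simple_graph_def by auto
  have Wmem: "\<And>x c. (x,c) \<in> W \<longleftrightarrow> x \<in> V \<and> c < n \<and> (x,c) \<notin> S"
    unfolding W_def kron_Kn_vertices_def by auto
  have Iedge: "\<And>x y c e. (x,c) \<in> W \<Longrightarrow> (y,e) \<in> W \<Longrightarrow> E x y \<Longrightarrow> c \<noteq> e \<Longrightarrow> I (x,c) (y,e)"
    unfolding I_def induced_def R_def kron_Kn_adj_def using Wmem by auto
  have Rsym: "\<And>p q. R p q \<Longrightarrow> R q p" unfolding R_def kron_Kn_adj_def using Esym by auto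
  have Isym: "\<And>p q. I p q \<Longrightarrow> I q p" unfolding I_def induced_def using Rsym by blast
  have finS: "finite S" using SV finV unfolding kron_Kn_vertices_def
    by (meson finite_SigmaI finite_atLeastLessThan finite_subset)
  have degge: "\<And>x. x \<in> V \<Longrightarrow> \<delta> \<le> card {y\<in>V. E x y}"
    unfolding \<delta>_def min_degree_def degree_def using finV by (simp add: Min_le)
  have cS: "card S = (n - 1) * \<delta>" using cardS \<delta>_def by simp
  fix u assume u: "u \<in> V"
  obtain a where a: "(u,a) \<in> ({u} \<times> {0..<n}) - S" using nonempty u by blast
  have aW: "(u,a) \<in> W" using a u Wmem by auto
  have an: "a < n" using a by auto
  have "({u} \<times> {0..<n}) - S \<subseteq> component W R (u,a)"
  proof
    fix p assume p: "p \<in> ({u} \<times> {0..<n}) - S"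
    then obtain b where pb: "p = (u,b)" and bn: "b < n" and bS: "(u,b) \<notin> S" by auto
    have bW: "(u,b) \<in> W" using u bn bS Wmem by auto
    have "I\<^sup>*\<^sup>* (u,a) (u,b)"
    proof (rule ccontr)
      assume nc: "\<not> I\<^sup>*\<^sup>* (u,a) (u,b)"
      have ab: "a \<noteq> b" using nc by auto
      define K where "K = {0..<n} - {a,b}"
      define A where "A = {y\<in>V. E u y}"
      have cardK: "card K = n - 2" unfolding K_def using an bn ab
        by (subst card_Diff_subset) auto
      have i: "(w,c) \<in> S" if "E u w" "c \<in> K" for w c
      proof (rule ccontr)
        assume "(w,c) \<notin> S"
        then have "(w,c) \<in> W" using that EV Wmem K_def by auto
        then have "I (u,a) (w,c)" "I (w,c) (u,b)" using Iedge aW bW that Esym K_def by auto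
        then show False using nc by (meson converse_rtranclp_into_rtranclp r_into_rtranclp)
      qed
      obtain w1 where w1: "E u w1" "(w1,b) \<in> W"
      proof -
        obtain y where y: "y \<in> W" "R (u,a) y" using noiso aW unfolding W_def R_def by blast
        obtain w c where yy: "y = (w,c)" by (cases y)
        have "E u w" "c \<noteq> a" "c < n" using y(2) yy unfolding R_def kron_Kn_adj_def by auto
        moreover have "c = b" using i[of w c] y yy Wmem calculation K_def by auto
        ultimately show ?thesis using that y yy by auto
      qed
      obtain w2 where w2: "E u w2" "(w2,a) \<in> W"
      proof -
        obtain y where y: "y \<in> W" "R (u,b) y" using noiso bW unfolding W_def R_def by blast
        obtain w c where yy: "y = (w,c)" by (cases y)
        have "E u w" "c \<noteq> b" "c < n" using y(2) yy unfolding R_def kron_Kn_adj_def by auto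
        moreover have "c = a" using i[of w c] y yy Wmem calculation K_def by auto
        ultimately show ?thesis using that y yy by auto
      qed
      have iii: "(u,c) \<in> S" if "c \<in> K" for c
      proof (rule ccontr)
        assume "(u,c) \<notin> S"
        then have cW: "(u,c) \<in> W" using that u Wmem K_def by auto
        have "I (u,a) (w1,b)" "I (w1,b) (u,c)" "I (u,c) (w2,a)" "I (w2,a) (u,b)"
          using Iedge aW bW cW w1 w2 Esym ab that K_def by auto
        then show False using nc
          by (meson converse_rtranclp_into_rtranclp r_into_rtranclp)
      qed
      have uA: "u \<notin> A" using Eirr A_def by auto
      have finA: "finite A" using finV A_def by auto
      have dA: "\<delta> \<le> card A" using degge[OF u] A_def by simp
      show False
      proof (cases "\<exists>w. E u w \<and> (w,a) \<in> W \<and> (w,b) \<in> W")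
        case False
        define T1 where "T1 = (insert u A) \<times> K"
        define T2 where "T2 = S \<inter> (A \<times> {a,b})"
        have T1S: "T1 \<subseteq> S" using i iii A_def T1_def by auto
        have T2S: "T2 \<subseteq> S" using T2_def by auto
        have disj: "T1 \<inter> T2 = {}" using T1_def T2_def K_def by auto
        have "card (T1 \<union> T2) \<le> card S" using T1S T2S finS by (simp add: card_mono)
        hence c12: "card T1 + card T2 \<le> card S" using disj finS T1S T2S
          by (metis card_Un_disjoint finite_subset)
        have cT1: "card T1 = (card A + 1) * (n - 2)" unfolding T1_def
          using finA uA cardK by (simp add: card_cartesian_product)
        have "A \<subseteq> fst ` T2"
        proof
          fix z assume z: "z \<in> A"
          then have zV: "z \<in> V" "E u z" using A_def by auto
          then have "(z,a) \<in> S \<or> (z,b) \<in> S" using False Wmem an bn by auto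
          then show "z \<in> fst ` T2" using z T2_def by (metis fst_conv image_eqI insertCI IntI mem_Sigma_iff)
        qed
        hence "card A \<le> card T2" using finS T2_def
          by (metis card_image_le card_mono finite_Int finite_imageI le_trans)
        hence "(card A + 1) * (n - 2) + card A \<le> (n - 1) * \<delta>" using c12 cT1 cS by linarith
        moreover have "(\<delta> + 1) * (n - 2) + \<delta> \<le> (card A + 1) * (n - 2) + card A"
        proof -
          have "(\<delta> + 1) * (n - 2) \<le> (card A + 1) * (n - 2)" using dA by (intro mult_le_mono1) simp
          then show ?thesis using dA by linarith
        qed
        moreover have "(n - 1) * \<delta> < (\<delta> + 1) * (n - 2) + \<delta>"
        proof -
          obtain m where "n = m + 3" using n3 by (metis add.commute le_Suc_ex)
          then show ?thesis by (simp add: algebra_simps)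
        qed
        ultimately show False by linarith
      next
        case True
        then obtain w where w: "E u w" "(w,a) \<in> W" "(w,b) \<in> W" by blast
        have wV: "w \<in> V" using w Wmem by auto
        define Ny where "Ny = {y\<in>V. E w y} - {u}"
        have v1: "\<not> E u y" if "y \<in> Ny" for y
        proof
          assume uy: "E u y"
          have yV: "y \<in> V" "E w y" using that Ny_def by auto
          have "({y} \<times> {0..<n}) - S \<noteq> {}" using nonempty yV by auto
          then obtain q where "q \<in> ({y} \<times> {0..<n}) - S" by blast
          then obtain c where c: "c < n" "(y,c) \<notin> S" by auto
          have "c \<notin> K" using i uy c by auto
          then have "c = a \<or> c = b" using c K_def by auto
          then show False
          proof
            assume ca: "c = a"
            have "(y,a) \<in> W" using c ca yV Wmem by auto
            then have "I (u,a) (w,b)" "I (w,b) (y,a)" "I (y,a) (u,b)"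
              using Iedge aW bW w yV uy Esym ab by auto
            then show False using nc by (meson converse_rtranclp_into_rtranclp r_into_rtranclp)
          next
            assume cb: "c = b"
            have "(y,b) \<in> W" using c cb yV Wmem by auto
            then have "I (u,a) (y,b)" "I (y,b) (w,a)" "I (w,a) (u,b)"
              using Iedge aW bW w yV uy Esym ab by auto
            then show False using nc by (meson converse_rtranclp_into_rtranclp r_into_rtranclp)
          qed
        qed
        have v2: "(y,c) \<in> S" if "y \<in> Ny" "c \<in> K" for y c
        proof (rule ccontr)
          assume "(y,c) \<notin> S"
          then have cW: "(y,c) \<in> W" using that Ny_def Wmem K_def by auto
          have yV: "E w y" using that Ny_def by auto
          have "I (u,a) (w,b)" "I (w,b) (y,c)" "I (y,c) (w,a)" "I (w,a) (u,b)"
            using Iedge aW bW cW w yV Esym ab that K_def by auto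
          then show False using nc by (meson converse_rtranclp_into_rtranclp r_into_rtranclp)
        qed
        define T where "T = (A \<union> insert u Ny) \<times> K"
        have TS: "T \<subseteq> S" using i iii v2 A_def T_def by auto
        have finNy: "finite Ny" using finV Ny_def by auto
        have cNy: "card Ny = card {y\<in>V. E w y} - 1"
          unfolding Ny_def using u w(1) Esym finV by (subst card_Diff_singleton) auto
        have dw: "\<delta> \<le> card {y\<in>V. E w y}" using degge[OF wV] .
        have uNy: "u \<notin> Ny" using Ny_def by auto
        have dis: "A \<inter> insert u Ny = {}" using v1 uA A_def by auto
        have cU: "card (A \<union> insert u Ny) = card A + 1 + card Ny"
          using dis finA finNy uNy by (simp add: card_Un_disjoint)
        have cT: "card T = (card A + 1 + card Ny) * (n - 2)"
          unfolding T_def using cU cardK by (simp add: card_cartesian_product)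
        have "\<delta> + \<delta> \<le> card A + 1 + card Ny" using cNy dw dA dpos \<delta>_def by linarith
        hence "(\<delta> + \<delta>) * (n - 2) \<le> card T" unfolding cT by (rule mult_le_mono1)
        moreover have "(n - 1) * \<delta> \<le> (\<delta> + \<delta>) * (n - 2)"
        proof -
          obtain m where "n = m + 3" using n3 by (metis add.commute le_Suc_ex)
          then show ?thesis by (simp add: algebra_simps)
        qed
        ultimately have "card S \<le> card T" using cS by linarith
        hence TeqS: "T = S" using TS finS by (simp add: card_seteq)
        have "\<forall>x\<in>V. (x,a) \<in> W \<and> (x,b) \<in> W"
          using TeqS Wmem an bn unfolding T_def K_def by auto
        then have "bipartite V E"
          using double_cover[OF sg con u ab, of W R] Iedge nc Rsym
          unfolding I_def induced_def by blast
        then show False using nbip by simp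
      qed
    qed
    then show "p \<in> component W R (u,a)" using pb bW unfolding component_def I_def by simp
  qed
  then show "\<exists>x \<in> kron_Kn_vertices V n - S.
           ({u} \<times> {0..<n}) - S \<subseteq> component (kron_Kn_vertices V n - S) (kron_Kn_adj E n) x"
    using aW unfolding W_def R_def by blast
qed

end
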